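(* Let $n$ and $s$ be integers with $\gcd(s,n)=1$. If $p(x)\in\mathcal L_{n,q}$ satisfies $p(x)=\lambda\, p(x)^{[s]}$ for some $\lambda\in\mathbb F_{q^n}^*$, then $p(x)$ has rank at most one, i.e. $p\in\mathcal U_1$.
   Context: $q$ is a prime power, $[i]:=q^i$. $\mathcal L_{n,q}$ is the set of linearized polynomials $f(x)=\sum_{i=0}^{n-1}a_ix^{[i]}$ with $a_i\in\mathbb F_{q^n}$, identified with the $\mathbb F_q$-linear maps of $\mathbb F_{q^n}$ they induce; the rank of $f$ is the $\mathbb F_q$-dimension of its image. For $f(x)=\sum_i a_ix^{[i]}$, $f(x)^{[s]}$ denotes $x^{[s]}\circ f(x)=\sum_{i=0}^{n-1}a_i^{[s]}x^{[(i+s)\bmod n]}$. $\mathcal U_1$ denotes the set of elements of $\mathcal L_{n,q}$ of rank at most one. *)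

theory Defs
  imports "HOL-Algebra.Embedded_Algebras" "HOL-Computational_Algebra.Primes"
begin

text \<open>The field F_{q^n} is a finite HOL-Algebra field R with q^n elements.
  The subfield F_q is the set of fixed points of x \<mapsto> x^q.\<close>

definition Fq :: "('a, 'b) ring_scheme \<Rightarrow> nat \<Rightarrow> 'a set" where
  "Fq R q = {x \<in> carrier R. x [^]\<^bsub>R\<^esub> q = x}"

definition lin_eval :: "('a, 'b) ring_scheme \<Rightarrow> nat \<Rightarrow> nat \<Rightarrow> (nat \<Rightarrow> 'a) \<Rightarrow> 'a \<Rightarrow> 'a" where
  "lin_eval R q n a x = (\<Oplus>\<^bsub>R\<^esub> i \<in> {..<n}. a i \<otimes>\<^bsub>R\<^esub> x [^]\<^bsub>R\<^esub> (q ^ i))"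

text \<open>f^[s] = x^[s] composed with f, with s taken modulo n (x^[n] = x on F_{q^n}).\<close>

definition frob_comp :: "('a, 'b) ring_scheme \<Rightarrow> nat \<Rightarrow> nat \<Rightarrow> int \<Rightarrow> ('a \<Rightarrow> 'a) \<Rightarrow> 'a \<Rightarrow> 'a" where
  "frob_comp R q n s f x = (f x) [^]\<^bsub>R\<^esub> (q ^ nat (s mod int n))"

definition lin_rank :: "('a, 'b) ring_scheme \<Rightarrow> nat \<Rightarrow> ('a \<Rightarrow> 'a) \<Rightarrow> nat" where
  "lin_rank R q f = (THE r. ring.dimension R r (Fq R q) (f ` carrier R))"

end

theory Submission
  imports Defs
begin

context field begin

lemma pow_one_nat:
  assumes z: "z \<in> carrier R"
  shows "z [^] (1::nat) = z"
proof -
  have "z [^] (Suc 0) = z [^] (0::nat) \<otimes> z" by (rule nat_pow_Suc)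
  also have "\<dots> = z" using z by simp
  finally show ?thesis by simp
qed

lemma frob_period:
  assumes fin: "finite (carrier R)" and cd: "card (carrier R) = q ^ n"
    and z: "z \<in> carrier R"
  shows "z [^] (q ^ n) = z"
proof (cases "z = \<zero>")
  case True
  have "card (carrier R) > 0" using fin one_closed card_gt_0_iff by blast
  then have "q ^ n \<noteq> 0" using cd by simp
  then show ?thesis using True by (simp add: nat_pow_zero)
next
  case False
  interpret G: group "mult_of R" by (rule field_mult_group)
  have zc: "z \<in> carrier (mult_of R)" using z False by simp
  have "z [^]\<^bsub>mult_of R\<^esub> order (mult_of R) = \<one>\<^bsub>mult_of R\<^esub>"
    by (rule G.pow_order_eq_1[OF zc])
  then have 1: "z [^] (q ^ n - 1) = \<one>"
    using order_mult_of[OF fin] cd by (simp add: nat_pow_mult_of order_def)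
  have "card (carrier R) > 0" using fin one_closed card_gt_0_iff by blast
  then have "q ^ n = Suc (q ^ n - 1)" using cd by simp
  then have "z [^] (q ^ n) = z [^] (q ^ n - 1) \<otimes> z" using nat_pow_Suc[of z "q ^ n - 1"] by simp
  also have "\<dots> = z" using 1 z by (metis l_one)
  finally show ?thesis .
qed

lemma frob_mod:
  assumes fin: "finite (carrier R)" and cd: "card (carrier R) = q ^ n"
    and z: "z \<in> carrier R"
  shows "z [^] (q ^ m) = z [^] (q ^ (m mod n))"
proof -
  have "z [^] (q ^ (n * d + r)) = z [^] (q ^ r)" for d r
  proof (induction d)
    case 0 then show ?case by simp
  next
    case (Suc d)
    have e0: "n * Suc d + r = n + (n * d + r)" by simp
    have eq: "q ^ (n * Suc d + r) = q ^ n * q ^ (n * d + r)"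
      unfolding e0 by (rule power_add)
    have "z [^] (q ^ (n * Suc d + r)) = (z [^] (q ^ n)) [^] (q ^ (n * d + r))"
      unfolding eq by (simp only: nat_pow_pow[OF z])
    also have "\<dots> = z [^] (q ^ (n * d + r))" using frob_period[OF fin cd z] by simp
    finally show ?case using Suc by simp
  qed
  from this[of "m div n" "m mod n"] show ?thesis by (simp only: mult_div_mod_eq)
qed

lemma frob_iter:
  fixes q t j :: nat
  assumes z: "z \<in> carrier R" and h: "z [^] (q ^ t) = z"
  shows "z [^] (q ^ (t * j)) = z"
proof (induction j)
  case 0
  then show ?case using pow_one_nat[OF z] by simp
next
  case (Suc j)
  have e0: "t * Suc j = t * j + t" by simp
  have eq: "q ^ (t * Suc j) = q ^ (t * j) * q ^ t"
    unfolding e0 by (rule power_add)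
  have "z [^] (q ^ (t * Suc j)) = (z [^] (q ^ (t * j))) [^] (q ^ t)"
    unfolding eq by (simp only: nat_pow_pow[OF z])
  then show ?case using Suc h by simp
qed

lemma frob_fix:
  assumes fin: "finite (carrier R)" and cd: "card (carrier R) = q ^ n"
    and z: "z \<in> carrier R" and h: "z [^] (q ^ t) = z"
    and u: "(t * u) mod n = 1 mod n"
  shows "z [^] q = z"
proof -
  have "z [^] q = z [^] (q ^ 1)" by simp
  also have "\<dots> = z [^] (q ^ (1 mod n))" by (rule frob_mod[OF fin cd z])
  also have "\<dots> = z [^] (q ^ ((t * u) mod n))" using u by simp
  also have "\<dots> = z [^] (q ^ (t * u))" by (rule frob_mod[OF fin cd z, symmetric])
  also have "\<dots> = z" by (rule frob_iter[OF z h])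
  finally show ?thesis .
qed

lemma inv_pow:
  assumes "d \<in> carrier R" "d \<noteq> \<zero>"
  shows "(inv d) [^] (m::nat) = inv (d [^] m)"
proof -
  have di: "inv d \<in> carrier R" "d \<otimes> inv d = \<one>" using assms field_Units by auto
  have "d [^] m \<otimes> (inv d) [^] m = (d \<otimes> inv d) [^] m"
    by (rule sym, rule nat_pow_distrib[OF assms(1) di(1)])
  also have "\<dots> = \<one>" using di by simp
  finally show ?thesis using comm_inv_char[of "d [^] m" "(inv d) [^] m"] assms di by simp
qed

lemma line_ext_mem:
  assumes "K \<subseteq> carrier R" "v \<in> carrier R"
  shows "x \<in> line_extension K v E \<longleftrightarrow> (\<exists>k\<in>K. \<exists>e\<in>E. x = k \<otimes> v \<oplus> e)"
  unfolding line_extension_def set_add_def' r_coset_def by auto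

lemma line_ext_memI:
  assumes "K \<subseteq> carrier R" "v \<in> carrier R" "k \<in> K" "e \<in> E"
  shows "k \<otimes> v \<oplus> e \<in> line_extension K v E"
  using line_ext_mem[OF assms(1,2)] assms(3,4) by blast

lemma line_ext_memI':
  assumes "K \<subseteq> carrier R" "v \<in> carrier R" "k \<in> K" "e \<in> E" "x = k \<otimes> v \<oplus> e"
  shows "x \<in> line_extension K v E"
  using line_ext_memI[OF assms(1-4)] assms(5) by simp

lemma dim_back:
  "dimension (Suc n) K E \<Longrightarrow> \<exists>v \<in> carrier R. \<exists>E'. dimension n K E' \<and> v \<notin> E' \<and> E = line_extension K v E'"
  by (cases rule: dimension.cases) auto

lemma line_ext_zero_elim:
  assumes "K \<subseteq> carrier R" "v \<in> carrier R" "x \<in> line_extension K v {\<zero>}"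
  obtains k where "k \<in> K" "x = k \<otimes> v"
proof -
  obtain k e where k: "k \<in> K" "e \<in> {\<zero>}" "x = k \<otimes> v \<oplus> e"
    using assms(3) line_ext_mem[OF assms(1,2)] by blast
  have "k \<in> carrier R" using k(1) assms(1) by blast
  then have "x = k \<otimes> v" using k(2,3) assms(2) by simp
  then show ?thesis using that k(1) by blast
qed

lemma dim_zero_in:
  "dimension m K E \<Longrightarrow> K \<subseteq> carrier R \<Longrightarrow> \<zero> \<in> K \<Longrightarrow> \<zero> \<in> E \<and> E \<subseteq> carrier R"
proof (induction rule: dimension.induct)
  case (zero_dim K) then show ?case by simp
next
  case (Suc_dim v E n K)
  have IH: "\<zero> \<in> E" "E \<subseteq> carrier R" using Suc_dim.IH[OF Suc_dim.prems] by auto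
  have "\<zero> = \<zero> \<otimes> v \<oplus> \<zero>" using Suc_dim.hyps(1) by simp
  then have "\<zero> \<in> line_extension K v E"
    by (rule line_ext_memI'[OF Suc_dim.prems(1) Suc_dim.hyps(1) Suc_dim.prems(2) IH(1)])
  moreover have "line_extension K v E \<subseteq> carrier R"
  proof
    fix x assume "x \<in> line_extension K v E"
    then obtain k e where "k \<in> K" "e \<in> E" "x = k \<otimes> v \<oplus> e"
      using line_ext_mem[OF Suc_dim.prems(1) Suc_dim.hyps(1)] by blast
    then show "x \<in> carrier R" using Suc_dim.prems(1) Suc_dim.hyps(1) IH(2) by blast
  qed
  ultimately show ?case by blast
qed

lemma dim_of_zero:
  assumes "dimension m K {\<zero>}" "K \<subseteq> carrier R" "\<zero> \<in> K" "\<one> \<in> K"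
  shows "m = 0"
proof (rule ccontr)
  assume "m \<noteq> 0"
  then obtain k where "m = Suc k" by (cases m) auto
  with assms(1) have "dimension (Suc k) K {\<zero>}" by (simp only:)
  from dim_back[OF this] obtain v E' where v: "v \<in> carrier R" "v \<notin> E'" "dimension k K E'"
     "{\<zero>} = line_extension K v E'"
    by blast
  have z: "\<zero> \<in> E'" using dim_zero_in[OF v(3) assms(2,3)] by blast
  have "v = \<one> \<otimes> v \<oplus> \<zero>" using v(1) by simp
  then have "v \<in> line_extension K v E'" by (rule line_ext_memI'[OF assms(2) v(1) assms(4) z])
  then have "v \<in> {\<zero>}" unfolding v(4) .
  then have "v = \<zero>" by simp
  then show False using v(2) z by simp
qed

lemma dim_of_line:
  assumes "dimension m K (line_extension K y {\<zero>})" "K \<subseteq> carrier R" "\<zero> \<in> K" "\<one> \<in> K"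
    and y: "y \<in> carrier R" "y \<noteq> \<zero>"
    and cl: "\<And>c d. c \<in> K \<Longrightarrow> d \<in> K \<Longrightarrow> d \<noteq> \<zero> \<Longrightarrow> c \<otimes> inv d \<in> K"
  shows "m = 1"
proof -
  let ?E = "line_extension K y {\<zero>}"
  have "y = \<one> \<otimes> y \<oplus> \<zero>" using y by simp
  then have yE: "y \<in> ?E" by (rule line_ext_memI'[OF assms(2) y(1) assms(4) singletonI])
  have "m \<noteq> 0"
  proof
    assume "m = 0"
    from assms(1) \<open>m = 0\<close> have "dimension 0 K ?E" by (simp only:)
    then have "?E = {\<zero>}" by (rule dimension.cases) auto
    then show False using yE y(2) by simp
  qed
  moreover have "\<not> m \<ge> 2"
  proof
    assume "m \<ge> 2"
    then obtain k where "m = Suc (Suc k)" by (metis add_2_eq_Suc le_Suc_ex)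
    with assms(1) have "dimension (Suc (Suc k)) K ?E" by (simp only:)
    from dim_back[OF this] obtain v E1 where v: "v \<in> carrier R" "v \<notin> E1"
       "dimension (Suc k) K E1" "?E = line_extension K v E1"
      by blast
    from dim_back[OF v(3)] obtain w E2 where w: "w \<in> carrier R" "w \<notin> E2"
       "dimension k K E2" "E1 = line_extension K w E2"
      by blast
    have z2: "\<zero> \<in> E2" using dim_zero_in[OF w(3) assms(2,3)] by blast
    have z1: "\<zero> \<in> E1 \<and> E1 \<subseteq> carrier R" using dim_zero_in[OF v(3) assms(2,3)] by blast
    have "w = \<one> \<otimes> w \<oplus> \<zero>" using w(1) by simp
    then have wE1: "w \<in> E1" unfolding w(4) by (rule line_ext_memI'[OF assms(2) w(1) assms(4) z2])
    have "w \<in> ?E"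
    proof -
      have "w = \<zero> \<otimes> v \<oplus> w" using w(1) v(1) by simp
      then show ?thesis unfolding v(4) by (rule line_ext_memI'[OF assms(2) v(1) assms(3) wE1])
    qed
    then obtain d where d: "d \<in> K" "w = d \<otimes> y"
      by (rule line_ext_zero_elim[OF assms(2) y(1)])
    have "v = \<one> \<otimes> v \<oplus> \<zero>" using v(1) by simp
    then have vE: "v \<in> ?E" unfolding v(4) by (rule line_ext_memI'[OF assms(2) v(1) assms(4) conjunct1[OF z1]])
    then obtain c where c: "c \<in> K" "v = c \<otimes> y"
      by (rule line_ext_zero_elim[OF assms(2) y(1)])
    have dc: "d \<in> carrier R" "c \<in> carrier R" using c(1) d(1) assms(2) by auto
    have dnz: "d \<noteq> \<zero>"
    proof
      assume "d = \<zero>"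
      then have "w = \<zero>" using d(2) y(1) by simp
      then show False using z2 w(2) by auto
    qed
    have dinv: "inv d \<in> carrier R" "inv d \<otimes> d = \<one>" using dc dnz field_Units by auto
    have "v = c \<otimes> y" by (rule c(2))
    also have "\<dots> = c \<otimes> ((inv d \<otimes> d) \<otimes> y)" using dinv(2) y(1) by simp
    also have "\<dots> = (c \<otimes> inv d) \<otimes> (d \<otimes> y)" using dc dinv(1) y(1) by (simp add: m_assoc)
    also have "\<dots> = (c \<otimes> inv d) \<otimes> w \<oplus> \<zero>" using d(2) dc dinv(1) y(1) by simp
    finally have "v = (c \<otimes> inv d) \<otimes> w \<oplus> \<zero>" .
    then have "v \<in> E1" unfolding w(4) by (rule line_ext_memI'[OF assms(2) w(1) cl[OF c(1) d(1) dnz] z2])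
    then show False using v(2) by (rule notE[rotated])
  qed
  ultimately show ?thesis by linarith
qed

lemma main_aux:
  fixes q n :: nat and s :: int and a :: "nat \<Rightarrow> 'a" and lam :: 'a
  assumes "True" and "finite (carrier R)"
    and "True"
    and "n > 0" and "card (carrier R) = q ^ n"
    and "gcd s (int n) = 1"
    and "\<And>i. i < n \<Longrightarrow> a i \<in> carrier R"
    and "lam \<in> carrier R" and "lam \<noteq> \<zero>"
    and "\<forall>x \<in> carrier R. lin_eval R q n a x
           = lam \<otimes> frob_comp R q n s (lin_eval R q n a) x"
  shows "lin_rank R q (lin_eval R q n a) \<le> 1"
proof -
  define f where "f = lin_eval R q n a"
  define K where "K = Fq R q"
  define t where "t = nat (s mod int n)"
  have fin: "finite (carrier R)" and cd: "card (carrier R) = q ^ n" using assms(2,5) by auto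
  obtain u where u: "(t * u) mod n = 1 mod n"
  proof -
    have it: "int t = s mod int n" using assms(4) by (simp add: t_def)
    have "gcd s (int n) = gcd (int n) (s mod int n)"
      by (rule gcd_non_0_int) (use assms(4) in simp)
    then have "gcd (int n) (int t) = 1" using assms(6) it by simp
    then have "gcd n t = 1" by simp
    then have gt: "gcd t n = 1" by (simp only: gcd.commute)
    show ?thesis
    proof (cases "t = 0")
      case True then have "n = 1" using gt by simp
      then show ?thesis using that[of 0] by simp
    next
      case False
      from bezout_nat[OF False, of n] obtain x y where "t * x = n * y + gcd t n" by blast
      then have "t * x = 1 + y * n" using gt by (simp add: mult.commute)
      then have "(t * x) mod n = 1 mod n" by (simp only: mod_mult_self1)
      then show ?thesis by (rule that)
    qed
  qed
  have "card (carrier R) > 0" using fin one_closed card_gt_0_iff by blast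
  then have "q ^ n \<noteq> 0" using cd by simp
  then have q0: "q \<noteq> 0" using assms(4) by simp
  have Ksub: "K \<subseteq> carrier R" unfolding K_def Fq_def by auto
  have K0: "\<zero> \<in> K" unfolding K_def Fq_def using q0 by (simp add: nat_pow_zero)
  have K1: "\<one> \<in> K" unfolding K_def Fq_def by simp
  have Kinv: "c \<otimes> inv d \<in> K" if "c \<in> K" "d \<in> K" "d \<noteq> \<zero>" for c d
  proof -
    have cd': "c \<in> carrier R" "d \<in> carrier R" "c [^] q = c" "d [^] q = d"
      using that unfolding K_def Fq_def by auto
    have di: "inv d \<in> carrier R" using cd' that field_Units by auto
    have "(c \<otimes> inv d) [^] q = c [^] q \<otimes> inv (d [^] q)"
      using cd' di that by (simp add: nat_pow_distrib inv_pow)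
    then show ?thesis using cd' di unfolding K_def Fq_def by simp
  qed
  have Kpow: "c [^] (q ^ i) = c" if "c \<in> K" for c i
  proof (induction i)
    case 0
    have "c \<in> carrier R" using that Ksub by blast
    have e: "q ^ 0 = (1::nat)" by simp
    show ?case unfolding e by (rule pow_one_nat) fact
  next
    case (Suc i)
    have cc: "c \<in> carrier R" "c [^] q = c" using that unfolding K_def Fq_def by auto
    have "c [^] (q ^ Suc i) = (c [^] (q ^ i)) [^] q" by (simp only: power_Suc2 nat_pow_pow[OF cc(1)])
    then show ?case using Suc cc by simp
  qed
  have fc: "f x \<in> carrier R" if "x \<in> carrier R" for x
    unfolding f_def lin_eval_def using that assms(7) by (intro finsum_closed) auto
  have fs: "f (c \<otimes> x) = c \<otimes> f x" if "c \<in> K" "x \<in> carrier R" for c x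
  proof -
    have c: "c \<in> carrier R" using that Ksub by auto
    have "f (c \<otimes> x) = (\<Oplus>i \<in> {..<n}. c \<otimes> (a i \<otimes> x [^] (q ^ i)))"
      unfolding f_def lin_eval_def
    proof (rule finsum_cong')
      fix i assume "i \<in> {..<n}"
      then have ai: "a i \<in> carrier R" using assms(7) by auto
      have "(c \<otimes> x) [^] (q ^ i) = c \<otimes> x [^] (q ^ i)"
        using c that Kpow[OF that(1)] by (simp add: nat_pow_distrib)
      then show "a i \<otimes> (c \<otimes> x) [^] (q ^ i) = c \<otimes> (a i \<otimes> x [^] (q ^ i))"
        using ai c that by (simp add: m_lcomm)
    qed (use c that assms(7) in auto)
    also have "\<dots> = c \<otimes> f x"
      unfolding f_def lin_eval_def using c that assms(7) by (subst finsum_rdistr) auto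
    finally show ?thesis .
  qed
  have feq: "f x = lam \<otimes> (f x) [^] (q ^ t)" if "x \<in> carrier R" for x
  proof -
    have "lin_eval R q n a x = lam \<otimes> frob_comp R q n s (lin_eval R q n a) x"
      using assms(10) that by blast
    then show ?thesis unfolding f_def t_def by (simp only: frob_comp_def)
  qed
  have key: "\<exists>c\<in>K. f x = c \<otimes> f x0" if x: "x \<in> carrier R" and x0: "x0 \<in> carrier R"
    and nz: "f x0 \<noteq> \<zero>" for x x0
  proof (cases "f x = \<zero>")
    case True then show ?thesis using K0 fc[OF x0] by (intro bexI[of _ "\<zero>"]) auto
  next
    case False
    define y where "y = f x"
    define y0 where "y0 = f x0"
    have yc: "y \<in> carrier R" "y0 \<in> carrier R" using fc x x0 by (auto simp: y_def y0_def)
    have y0i: "inv y0 \<in> carrier R" "inv y0 \<otimes> y0 = \<one>" using yc nz field_Units by (auto simp: y0_def)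
    define c where "c = y \<otimes> inv y0"
    have cc: "c \<in> carrier R" using yc y0i by (simp add: c_def)
    have cy: "c \<otimes> y0 = y" using yc y0i by (simp add: c_def m_assoc)
    define P where "P = q ^ t"
    have fy: "y = lam \<otimes> y [^] P" using feq[OF x] unfolding y_def P_def .
    have fy0: "y0 = lam \<otimes> y0 [^] P" using feq[OF x0] unfolding y0_def P_def .
    have e1: "y [^] P = c [^] P \<otimes> y0 [^] P"
      using cc yc cy[symmetric] nat_pow_distrib[of c y0 P] by simp
    have cP: "c [^] P \<in> carrier R" "y0 [^] P \<in> carrier R" using cc yc by auto
    have "c [^] P \<otimes> y0 = c [^] P \<otimes> (lam \<otimes> y0 [^] P)" using fy0 by simp
    also have "\<dots> = lam \<otimes> (c [^] P \<otimes> y0 [^] P)" using cP assms(8) by (simp add: m_lcomm)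
    also have "\<dots> = y" using fy e1 by simp
    also have "\<dots> = c \<otimes> y0" using cy by simp
    finally have "c [^] P \<otimes> y0 = c \<otimes> y0" .
    then have "c [^] P = c"
      using m_rcancel[of y0 "c [^] P" c] cc cP yc nz unfolding y0_def by simp
    then have "c [^] q = c" using frob_fix[OF fin cd cc _ u] unfolding P_def by simp
    then have "c \<in> K" using cc unfolding K_def Fq_def by simp
    moreover have "f x = c \<otimes> f x0" using cy unfolding y_def y0_def by simp
    ultimately show ?thesis by blast
  qed
  show ?thesis
  proof (cases "\<forall>x\<in>carrier R. f x = \<zero>")
    case True
    have "f ` carrier R \<subseteq> {\<zero>}" using True by blast
    moreover have "\<zero> \<in> f ` carrier R" using True one_closed by (metis image_eqI)
    ultimately have E: "f ` carrier R = {\<zero>}" by blast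
    have "(THE r. dimension r K (f ` carrier R)) = 0"
      unfolding E
    proof (rule the_equality)
      show "dimension 0 K {\<zero>}" by (rule zero_dim)
    next
      fix r assume "dimension r K {\<zero>}"
      then show "r = 0" by (rule dim_of_zero[OF _ Ksub K0 K1])
    qed
    then show ?thesis by (simp only: lin_rank_def f_def K_def)
  next
    case False
    then obtain x0 where x0: "x0 \<in> carrier R" "f x0 \<noteq> \<zero>" by auto
    have E: "f ` carrier R = line_extension K (f x0) {\<zero>}"
    proof
      show "f ` carrier R \<subseteq> line_extension K (f x0) {\<zero>}"
      proof
        fix z assume "z \<in> f ` carrier R"
        then obtain x where x: "x \<in> carrier R" "z = f x" by auto
        obtain c where c: "c \<in> K" "f x = c \<otimes> f x0" using key[OF x(1) x0(1) x0(2)] by blast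
        have "c \<otimes> f x0 \<in> carrier R" using c(1) Ksub fc[OF x0(1)] by blast
        then have "z = c \<otimes> f x0 \<oplus> \<zero>" using x(2) c(2) by simp
        then show "z \<in> line_extension K (f x0) {\<zero>}"
          by (rule line_ext_memI'[OF Ksub fc[OF x0(1)] c(1) singletonI])
      qed
    next
      show "line_extension K (f x0) {\<zero>} \<subseteq> f ` carrier R"
      proof
        fix z assume "z \<in> line_extension K (f x0) {\<zero>}"
        then obtain c where c: "c \<in> K" "z = c \<otimes> f x0"
          by (rule line_ext_zero_elim[OF Ksub fc[OF x0(1)]])
        then have "z = f (c \<otimes> x0)" using fs[OF c(1) x0(1)] by simp
        moreover have "c \<otimes> x0 \<in> carrier R" using c Ksub x0 by auto
        ultimately show "z \<in> f ` carrier R" by blast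
      qed
    qed
    have d1: "dimension 1 K (line_extension K (f x0) {\<zero>})"
      using Suc_dim[OF fc[OF x0(1)] _ zero_dim, of K] x0(2) by simp
    have "(THE r. dimension r K (f ` carrier R)) = 1"
      unfolding E
    proof (rule the_equality)
      show "dimension 1 K (line_extension K (f x0) {\<zero>})" by (rule d1)
    next
      fix r assume "dimension r K (line_extension K (f x0) {\<zero>})"
      then show "r = 1" by (rule dim_of_line[OF _ Ksub K0 K1 fc[OF x0(1)] x0(2) Kinv])
    qed
    then show ?thesis by (simp only: lin_rank_def f_def K_def)
  qed
qed

end

theorem lemma3p3:
  fixes R :: "('a, 'b) ring_scheme" and q n :: nat and s :: int
    and a :: "nat \<Rightarrow> 'a" and lam :: 'a
  assumes "field R" and "finite (carrier R)"
    and "\<exists>p k. prime p \<and> k > 0 \<and> q = p ^ k"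
    and "n > 0" and "card (carrier R) = q ^ n"
    and "gcd s (int n) = 1"
    and "\<And>i. i < n \<Longrightarrow> a i \<in> carrier R"
    and "lam \<in> carrier R" and "lam \<noteq> \<zero>\<^bsub>R\<^esub>"
    and "\<forall>x \<in> carrier R. lin_eval R q n a x
           = lam \<otimes>\<^bsub>R\<^esub> frob_comp R q n s (lin_eval R q n a) x"
  shows "lin_rank R q (lin_eval R q n a) \<le> 1"
  using field.main_aux[OF assms(1) TrueI assms(2) TrueI assms(4-10)] .

end
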